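(* Let $A$ be an integral domain with field of fractions $K$. Every sublocalization over $A$ is a localization of $A$ if and only if for each $x\in K\setminus A$ the ideal $\sqrt{(A:_A x)}$ is the radical of a principal ideal. Moreover, if each principal ideal of $A$ has only finitely many associated primes, then every sublocalization over $A$ is a localization of $A$ if and only if each associated prime of a principal ideal of $A$ is the radical of a principal ideal.
   Context: $(A:_A x)=\{a\in A: ax\in A\}$. An overring of $A$ is a subring of $K$ containing $A$; it is a localization of $A$ if it equals $S^{-1}A$ for a multiplicatively closed set $S$ of nonzero elements of $A$, and a sublocalization over $A$ if it is an intersection of localizations of $A$. A prime $P$ of $A$ is an associated prime of an ideal $I$ if there is $a\in A$ such that $P$ is a minimal prime over $(I:_A a)=\{r\in A: ra\in I\}$. *)

theory Defs
  imports Main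
begin

text \<open>An integral domain A is modelled as a subring of a field K (the type 'k)
  such that K is the field of fractions of A.\<close>

definition is_subring :: "'k::field set \<Rightarrow> bool" where
  "is_subring A \<longleftrightarrow> 0 \<in> A \<and> 1 \<in> A \<and>
     (\<forall>x\<in>A. \<forall>y\<in>A. x + y \<in> A \<and> x - y \<in> A \<and> x * y \<in> A)"

definition is_fraction_field_of :: "'k::field set \<Rightarrow> bool" where
  "is_fraction_field_of A \<longleftrightarrow> (\<forall>x::'k. \<exists>a\<in>A. \<exists>b\<in>A. b \<noteq> 0 \<and> x = a / b)"

definition is_ideal :: "'k::field set \<Rightarrow> 'k set \<Rightarrow> bool" where
  "is_ideal A I \<longleftrightarrow> I \<subseteq> A \<and> 0 \<in> I \<and> (\<forall>x\<in>I. \<forall>y\<in>I. x + y \<in> I) \<and>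
     (\<forall>r\<in>A. \<forall>x\<in>I. r * x \<in> I)"

definition principal_ideal :: "'k::field set \<Rightarrow> 'k \<Rightarrow> 'k set" where
  "principal_ideal A a = {a * r | r. r \<in> A}"

definition radical :: "'k::field set \<Rightarrow> 'k set \<Rightarrow> 'k set" where
  "radical A I = {r \<in> A. \<exists>n::nat. r ^ n \<in> I}"

definition elt_colon :: "'k::field set \<Rightarrow> 'k \<Rightarrow> 'k set" where
  "elt_colon A x = {a \<in> A. a * x \<in> A}"

definition ideal_colon :: "'k::field set \<Rightarrow> 'k set \<Rightarrow> 'k \<Rightarrow> 'k set" where
  "ideal_colon A I a = {r \<in> A. r * a \<in> I}"

definition is_prime_ideal :: "'k::field set \<Rightarrow> 'k set \<Rightarrow> bool" where
  "is_prime_ideal A P \<longleftrightarrow> is_ideal A P \<and> P \<noteq> A \<and>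
     (\<forall>x\<in>A. \<forall>y\<in>A. x * y \<in> P \<longrightarrow> x \<in> P \<or> y \<in> P)"

definition minimal_prime_over :: "'k::field set \<Rightarrow> 'k set \<Rightarrow> 'k set \<Rightarrow> bool" where
  "minimal_prime_over A I P \<longleftrightarrow> is_prime_ideal A P \<and> I \<subseteq> P \<and>
     (\<forall>Q. is_prime_ideal A Q \<and> I \<subseteq> Q \<and> Q \<subseteq> P \<longrightarrow> Q = P)"

definition associated_prime :: "'k::field set \<Rightarrow> 'k set \<Rightarrow> 'k set \<Rightarrow> bool" where
  "associated_prime A I P \<longleftrightarrow> (\<exists>a\<in>A. minimal_prime_over A (ideal_colon A I a) P)"

definition mult_closed_nonzero :: "'k::field set \<Rightarrow> 'k set \<Rightarrow> bool" where
  "mult_closed_nonzero A S \<longleftrightarrow> S \<subseteq> A - {0} \<and> 1 \<in> S \<and> (\<forall>s\<in>S. \<forall>t\<in>S. s * t \<in> S)"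

definition localization :: "'k::field set \<Rightarrow> 'k set \<Rightarrow> 'k set" where
  "localization A S = {a / s | a s. a \<in> A \<and> s \<in> S}"

definition is_localization :: "'k::field set \<Rightarrow> 'k set \<Rightarrow> bool" where
  "is_localization A B \<longleftrightarrow> (\<exists>S. mult_closed_nonzero A S \<and> B = localization A S)"

definition is_sublocalization :: "'k::field set \<Rightarrow> 'k set \<Rightarrow> bool" where
  "is_sublocalization A B \<longleftrightarrow> (\<exists>F. (\<forall>C\<in>F. is_localization A C) \<and> B = \<Inter>F)"

end

theory Submission
  imports Defs
begin

lemma sr_0: "is_subring A \<Longrightarrow> 0 \<in> A" by (simp add: is_subring_def)
lemma sr_1: "is_subring A \<Longrightarrow> 1 \<in> A" by (simp add: is_subring_def)
lemma sr_add: "is_subring A \<Longrightarrow> x \<in> A \<Longrightarrow> y \<in> A \<Longrightarrow> x + y \<in> A" by (simp add: is_subring_def)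
lemma sr_diff: "is_subring A \<Longrightarrow> x \<in> A \<Longrightarrow> y \<in> A \<Longrightarrow> x - y \<in> A" by (simp add: is_subring_def)
lemma sr_mult: "is_subring A \<Longrightarrow> x \<in> A \<Longrightarrow> y \<in> A \<Longrightarrow> x * y \<in> A" by (simp add: is_subring_def)
lemma sr_pow: "is_subring A \<Longrightarrow> x \<in> A \<Longrightarrow> x ^ n \<in> A"
  by (induction n) (simp_all add: sr_1 sr_mult)
lemma sr_prod: "is_subring A \<Longrightarrow> (\<And>i. i \<in> S \<Longrightarrow> f i \<in> A) \<Longrightarrow> prod f S \<in> A"
  by (induction S rule: infinite_finite_induct) (simp_all add: sr_1 sr_mult)

lemma ideal_sub: "is_ideal A I \<Longrightarrow> I \<subseteq> A" by (simp add: is_ideal_def)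
lemma ideal_mult: "is_ideal A I \<Longrightarrow> r \<in> A \<Longrightarrow> x \<in> I \<Longrightarrow> r * x \<in> I" by (simp add: is_ideal_def)
lemma ideal_mult2: "is_ideal A I \<Longrightarrow> r \<in> A \<Longrightarrow> x \<in> I \<Longrightarrow> x * r \<in> I"
  by (metis ideal_mult mult.commute)
lemma ideal_add: "is_ideal A I \<Longrightarrow> x \<in> I \<Longrightarrow> y \<in> I \<Longrightarrow> x + y \<in> I" by (simp add: is_ideal_def)
lemma ideal_0: "is_ideal A I \<Longrightarrow> 0 \<in> I" by (simp add: is_ideal_def)

lemma prime_ideal: "is_prime_ideal A P \<Longrightarrow> is_ideal A P" by (simp add: is_prime_ideal_def)
lemma prime_one: assumes "is_subring A" "is_prime_ideal A P" shows "1 \<notin> P"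
proof
  assume "1 \<in> P"
  then have "A \<subseteq> P" using assms ideal_mult[of A P _ 1] prime_ideal by (metis mult.right_neutral subsetI)
  then show False using assms ideal_sub[OF prime_ideal] unfolding is_prime_ideal_def by blast
qed
lemma prime_mult: "is_prime_ideal A P \<Longrightarrow> x \<in> A \<Longrightarrow> y \<in> A \<Longrightarrow> x * y \<in> P \<Longrightarrow> x \<in> P \<or> y \<in> P"
  by (simp add: is_prime_ideal_def)
lemma prime_pow: assumes "is_subring A" "is_prime_ideal A P" "x \<in> A" "x ^ n \<in> P" shows "x \<in> P"
  using assms(4)
proof (induction n)
  case 0 then show ?case using prime_one[OF assms(1,2)] by simp
next
  case (Suc n)
  then show ?case using prime_mult[OF assms(2,3) sr_pow[OF assms(1,3)]] by auto
qed
lemma prime_rad: assumes "is_subring A" "is_prime_ideal A P" "J \<subseteq> P" shows "radical A J \<subseteq> P"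
  using prime_pow[OF assms(1,2)] assms(3) unfolding radical_def by blast

lemma prime_prod: assumes "is_subring A" "is_prime_ideal A P" "finite S" "\<And>i. i \<in> S \<Longrightarrow> f i \<in> A - P"
  shows "prod f S \<notin> P"
  using assms(3,4)
proof (induction S rule: finite_induct)
  case empty then show ?case using prime_one[OF assms(1,2)] by simp
next
  case (insert x F)
  have "prod f F \<in> A" using insert.prems by (intro sr_prod[OF assms(1)]) auto
  moreover have "f x \<in> A" "f x \<notin> P" "prod f F \<notin> P" using insert.prems insert.IH by auto
  ultimately have "f x * prod f F \<notin> P" using prime_mult[OF assms(2), of "f x" "prod f F"] by blast
  then show ?case using insert.hyps by simp
qed

lemma elt_colon_ideal: assumes sr: "is_subring A" shows "is_ideal A (elt_colon A x)"
  unfolding is_ideal_def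
proof (intro conjI ballI)
  show "elt_colon A x \<subseteq> A" by (auto simp: elt_colon_def)
  show "0 \<in> elt_colon A x" using sr_0[OF sr] by (simp add: elt_colon_def)
next
  fix a b assume "a \<in> elt_colon A x" "b \<in> elt_colon A x"
  then have "a \<in> A" "b \<in> A" "a * x \<in> A" "b * x \<in> A" by (auto simp: elt_colon_def)
  then have "a + b \<in> A" "a * x + b * x \<in> A" using sr_add[OF sr] by auto
  then show "a + b \<in> elt_colon A x" by (simp add: elt_colon_def distrib_right)
next
  fix r a assume "r \<in> A" "a \<in> elt_colon A x"
  then have "a \<in> A" "a * x \<in> A" by (auto simp: elt_colon_def)
  then have "r * a \<in> A" "r * (a * x) \<in> A" using sr_mult[OF sr] \<open>r \<in> A\<close> by auto
  then show "r * a \<in> elt_colon A x" by (simp add: elt_colon_def mult.assoc)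
qed

lemma ideal_extend:
  assumes sr: "is_subring A" and M: "is_ideal A M" and x: "x \<in> A"
  shows "is_ideal A {m + x * a | m a. m \<in> M \<and> a \<in> A}" (is "is_ideal A ?N")
    and "M \<subseteq> {m + x * a | m a. m \<in> M \<and> a \<in> A}" and "x \<in> {m + x * a | m a. m \<in> M \<and> a \<in> A}"
proof -
  have MA: "M \<subseteq> A" using ideal_sub[OF M] .
  show "is_ideal A ?N" unfolding is_ideal_def
  proof (intro conjI ballI)
    show "?N \<subseteq> A"
    proof
      fix z assume "z \<in> ?N"
      then obtain m a where "z = m + x * a" "m \<in> M" "a \<in> A" by blast
      then show "z \<in> A" using MA sr_add[OF sr] sr_mult[OF sr] x by blast
    qed
    show "0 \<in> ?N"
    proof -
      have "0 = 0 + x * 0" by simp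
      then show ?thesis using ideal_0[OF M] sr_0[OF sr] by blast
    qed
  next
    fix z w assume "z \<in> ?N" "w \<in> ?N"
    then obtain m a m' a' where "z = m + x * a" "m \<in> M" "a \<in> A" "w = m' + x * a'" "m' \<in> M" "a' \<in> A" by blast
    then have "z + w = (m + m') + x * (a + a')" "m + m' \<in> M" "a + a' \<in> A"
      by (auto simp: algebra_simps intro: ideal_add[OF M] sr_add[OF sr])
    then show "z + w \<in> ?N" by blast
  next
    fix r z assume "r \<in> A" "z \<in> ?N"
    then obtain m a where "z = m + x * a" "m \<in> M" "a \<in> A" by blast
    have "r * m \<in> M" using ideal_mult[OF M \<open>r \<in> A\<close> \<open>m \<in> M\<close>] .
    moreover have "r * a \<in> A" using sr_mult[OF sr \<open>r \<in> A\<close> \<open>a \<in> A\<close>] .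
    moreover have "r * z = r * m + x * (r * a)" using \<open>z = m + x * a\<close> by (simp add: algebra_simps)
    ultimately show "r * z \<in> ?N" by blast
  qed
  show "M \<subseteq> ?N"
  proof
    fix m assume "m \<in> M"
    have "m = m + x * 0" by simp
    then show "m \<in> ?N" using \<open>m \<in> M\<close> sr_0[OF sr] by blast
  qed
  show "x \<in> ?N"
  proof -
    have "x = 0 + x * 1" by simp
    then show ?thesis using ideal_0[OF M] sr_1[OF sr] by blast
  qed
qed

lemma exists_prime_avoid:
  assumes sr: "is_subring A" and J: "is_ideal A J" and r: "r \<in> A" "r \<notin> radical A J"
  shows "\<exists>Q. is_prime_ideal A Q \<and> J \<subseteq> Q \<and> r \<notin> Q"
proof -
  define S where "S = {L. is_ideal A L \<and> J \<subseteq> L \<and> (\<forall>n. r ^ n \<notin> L)}"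
  have JS: "J \<in> S" using r J unfolding S_def radical_def by auto
  have ch: "\<Union>C \<in> S" if "C \<noteq> {}" "subset.chain S C" for C
  proof -
    from that have Cs: "C \<subseteq> S" and tot: "\<forall>X\<in>C. \<forall>Y\<in>C. X \<subseteq> Y \<or> Y \<subseteq> X"
      by (auto simp: subset_chain_def)
    obtain L0 where L0: "L0 \<in> C" using \<open>C \<noteq> {}\<close> by blast
    have idC: "is_ideal A X" if "X \<in> C" for X using that Cs by (auto simp: S_def)
    have "is_ideal A (\<Union>C)" unfolding is_ideal_def
    proof (intro conjI ballI)
      show "\<Union>C \<subseteq> A" using idC ideal_sub by blast
      show "0 \<in> \<Union>C" using L0 idC ideal_0 by blast
    next
      fix x y assume "x \<in> \<Union>C" "y \<in> \<Union>C"
      then obtain X Y where XY: "X \<in> C" "x \<in> X" "Y \<in> C" "y \<in> Y" by blast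
      then have "X \<subseteq> Y \<or> Y \<subseteq> X" using tot by blast
      then show "x + y \<in> \<Union>C"
      proof
        assume "X \<subseteq> Y" then have "x + y \<in> Y" using XY idC ideal_add by blast
        then show ?thesis using XY by blast
      next
        assume "Y \<subseteq> X" then have "x + y \<in> X" using XY idC ideal_add by blast
        then show ?thesis using XY by blast
      qed
    next
      fix a x assume "a \<in> A" "x \<in> \<Union>C"
      then obtain X where "X \<in> C" "x \<in> X" by blast
      then have "a * x \<in> X" using idC ideal_mult \<open>a \<in> A\<close> by blast
      then show "a * x \<in> \<Union>C" using \<open>X \<in> C\<close> by blast
    qed
    moreover have "J \<subseteq> \<Union>C" using L0 Cs by (auto simp: S_def)
    moreover have "\<forall>n. r ^ n \<notin> \<Union>C" using Cs by (auto simp: S_def)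
    ultimately show ?thesis by (simp add: S_def)
  qed
  obtain M where M: "M \<in> S" "\<forall>X\<in>S. M \<subseteq> X \<longrightarrow> X = M"
    using subset_Zorn_nonempty[of S] ch JS by blast
  have Mid: "is_ideal A M" and JM: "J \<subseteq> M" and Mr: "\<forall>n. r ^ n \<notin> M" using M(1) by (auto simp: S_def)
  have ext: "\<exists>n. \<exists>m\<in>M. \<exists>a\<in>A. r ^ n = m + x * a" if "x \<in> A" "x \<notin> M" for x
  proof (rule ccontr)
    assume nx: "\<not> ?thesis"
    let ?N = "{m + x * a | m a. m \<in> M \<and> a \<in> A}"
    have "?N \<in> S" using ideal_extend[OF sr Mid that(1)] JM nx unfolding S_def by blast
    then have "?N = M" using M(2) ideal_extend(2)[OF sr Mid that(1)] by blast
    then show False using ideal_extend(3)[OF sr Mid that(1)] that(2) by blast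
  qed
  have "is_prime_ideal A M" unfolding is_prime_ideal_def
  proof (intro conjI ballI impI)
    show "is_ideal A M" by fact
    show "M \<noteq> A" using Mr r(1) by (metis power_one_right)
  next
    fix x y assume xy: "x \<in> A" "y \<in> A" "x * y \<in> M"
    show "x \<in> M \<or> y \<in> M"
    proof (rule ccontr)
      assume "\<not> (x \<in> M \<or> y \<in> M)"
      then obtain n m1 a1 k m2 a2 where e: "r ^ n = m1 + x * a1" "m1 \<in> M" "a1 \<in> A"
         "r ^ k = m2 + y * a2" "m2 \<in> M" "a2 \<in> A" using ext xy by meson
      have MA: "M \<subseteq> A" using ideal_sub[OF Mid] .
      have "r ^ (n + k) = m1 * (m2 + y * a2) + m2 * (x * a1) + (x * y) * (a1 * a2)"
        unfolding power_add e by (simp add: algebra_simps)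
      moreover have "m1 * (m2 + y * a2) \<in> M"
        using e MA xy by (intro ideal_mult2[OF Mid _ e(2)] sr_add[OF sr] sr_mult[OF sr]) auto
      moreover have "m2 * (x * a1) \<in> M"
        using e MA xy by (intro ideal_mult2[OF Mid _ e(5)] sr_mult[OF sr]) auto
      moreover have "(x * y) * (a1 * a2) \<in> M"
        using e MA xy by (intro ideal_mult2[OF Mid _ xy(3)] sr_mult[OF sr]) auto
      ultimately have "r ^ (n + k) \<in> M" by (metis ideal_add[OF Mid])
      then show False using Mr by blast
    qed
  qed
  moreover have "r \<notin> M" using Mr by (metis power_one_right)
  ultimately show ?thesis using JM by blast
qed

lemma inter_chain_prime:
  assumes sr: "is_subring A" and E: "E \<noteq> {}" "\<And>P. P \<in> E \<Longrightarrow> is_prime_ideal A P"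
    and tot: "\<forall>X\<in>E. \<forall>Y\<in>E. X \<subseteq> Y \<or> Y \<subseteq> X"
  shows "is_prime_ideal A (\<Inter>E)"
proof -
  obtain P0 where P0: "P0 \<in> E" using E by auto
  have id: "is_ideal A P" if "P \<in> E" for P using E(2)[OF that] prime_ideal by blast
  have "is_ideal A (\<Inter>E)" unfolding is_ideal_def
  proof (intro conjI ballI)
    show "\<Inter>E \<subseteq> A" using P0 id[OF P0] ideal_sub by blast
    show "0 \<in> \<Inter>E" using id ideal_0 by blast
  next
    fix x y assume "x \<in> \<Inter>E" "y \<in> \<Inter>E" then show "x + y \<in> \<Inter>E" using id ideal_add by blast
  next
    fix a x assume "a \<in> A" "x \<in> \<Inter>E" then show "a * x \<in> \<Inter>E" using id ideal_mult by blast
  qed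
  moreover have "\<Inter>E \<noteq> A"
  proof
    assume "\<Inter>E = A"
    then have "1 \<in> P0" using P0 sr_1[OF sr] by blast
    then show False using prime_one[OF sr E(2)[OF P0]] by blast
  qed
  moreover have "x \<in> \<Inter>E \<or> y \<in> \<Inter>E" if xy: "x \<in> A" "y \<in> A" "x * y \<in> \<Inter>E" for x y
  proof (rule ccontr)
    assume "\<not> ?thesis"
    then obtain X Y where X: "X \<in> E" "x \<notin> X" and Y: "Y \<in> E" "y \<notin> Y" by blast
    have "X \<subseteq> Y \<or> Y \<subseteq> X" using tot X Y by blast
    then show False
    proof
      assume "X \<subseteq> Y"
      then have "x \<notin> X" "y \<notin> X" using X Y by auto
      then show False using prime_mult[OF E(2)[OF X(1)] xy(1,2)] xy(3) X(1) by blast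
    next
      assume "Y \<subseteq> X"
      then have "x \<notin> Y" "y \<notin> Y" using X Y by auto
      then show False using prime_mult[OF E(2)[OF Y(1)] xy(1,2)] xy(3) Y(1) by blast
    qed
  qed
  ultimately show ?thesis unfolding is_prime_ideal_def by blast
qed

lemma exists_min_prime:
  assumes sr: "is_subring A" and J: "is_ideal A J" and Q: "is_prime_ideal A Q" "J \<subseteq> Q"
  shows "\<exists>P. minimal_prime_over A J P \<and> P \<subseteq> Q"
proof -
  define PP where "PP = {P. is_prime_ideal A P \<and> J \<subseteq> P \<and> P \<subseteq> Q}"
  define CC where "CC = (\<lambda>P. A - P) ` PP"
  have PPA: "P \<subseteq> A" if "P \<in> PP" for P using that ideal_sub prime_ideal by (auto simp: PP_def)
  have "Q \<in> PP" using Q by (simp add: PP_def)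
  then have CCne: "CC \<noteq> {}" unfolding CC_def by blast
  have ch: "\<Union>D \<in> CC" if "D \<noteq> {}" "subset.chain CC D" for D
  proof -
    from that have Ds: "D \<subseteq> CC" and tot: "\<forall>X\<in>D. \<forall>Y\<in>D. X \<subseteq> Y \<or> Y \<subseteq> X"
      by (auto simp: subset_chain_def)
    define E where "E = (\<lambda>X. A - X) ` D"
    have EP: "E \<subseteq> PP"
    proof
      fix P assume "P \<in> E"
      then obtain X where X: "X \<in> D" "P = A - X" by (auto simp: E_def)
      then obtain P' where "P' \<in> PP" "X = A - P'" using Ds by (auto simp: CC_def)
      then have "P = P'" using X PPA by auto
      then show "P \<in> PP" using \<open>P' \<in> PP\<close> by simp
    qed
    have DE: "X = A - (A - X)" if "X \<in> D" for X
      using that Ds by (auto simp: CC_def)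
    have Ene: "E \<noteq> {}" using that(1) by (simp add: E_def)
    have totE: "\<forall>X\<in>E. \<forall>Y\<in>E. X \<subseteq> Y \<or> Y \<subseteq> X" using tot unfolding E_def by blast
    have "\<Inter>E \<in> PP"
    proof -
      have "is_prime_ideal A (\<Inter>E)" using inter_chain_prime[OF sr Ene _ totE] EP by (auto simp: PP_def)
      moreover have "J \<subseteq> \<Inter>E" "\<Inter>E \<subseteq> Q" using EP Ene by (auto simp: PP_def)
      ultimately show ?thesis by (simp add: PP_def)
    qed
    moreover have "\<Union>D = A - \<Inter>E"
    proof
      show "\<Union>D \<subseteq> A - \<Inter>E"
      proof
        fix z assume "z \<in> \<Union>D"
        then obtain X where X: "X \<in> D" "z \<in> X" by blast
        then have "z \<in> A" "z \<notin> A - X" using DE[OF X(1)] by auto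
        then show "z \<in> A - \<Inter>E" using X(1) unfolding E_def by blast
      qed
      show "A - \<Inter>E \<subseteq> \<Union>D"
      proof
        fix z assume "z \<in> A - \<Inter>E"
        then obtain X where "X \<in> D" "z \<in> A" "z \<notin> A - X" unfolding E_def by blast
        then show "z \<in> \<Union>D" by blast
      qed
    qed
    ultimately show ?thesis by (simp add: CC_def)
  qed
  obtain M where M: "M \<in> CC" "\<forall>X\<in>CC. M \<subseteq> X \<longrightarrow> X = M"
    using subset_Zorn_nonempty[of CC] ch CCne by blast
  then obtain P0 where P0: "P0 \<in> PP" "M = A - P0" by (auto simp: CC_def)
  have "minimal_prime_over A J P0" unfolding minimal_prime_over_def
  proof (intro conjI allI impI)
    show "is_prime_ideal A P0" "J \<subseteq> P0" using P0 by (auto simp: PP_def)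
  next
    fix Q' assume Q': "is_prime_ideal A Q' \<and> J \<subseteq> Q' \<and> Q' \<subseteq> P0"
    then have "Q' \<in> PP" using P0 by (auto simp: PP_def)
    then have "A - Q' \<in> CC" by (simp add: CC_def)
    moreover have "M \<subseteq> A - Q'" using P0 Q' by auto
    ultimately have "A - Q' = A - P0" using M P0 by blast
    then show "Q' = P0" using PPA[OF \<open>Q' \<in> PP\<close>] PPA[OF P0(1)] by blast
  qed
  then show ?thesis using P0 by (auto simp: PP_def)
qed

lemma exists_min_prime_avoid:
  assumes sr: "is_subring A" and J: "is_ideal A J" and r: "r \<in> A" "r \<notin> radical A J"
  shows "\<exists>P. minimal_prime_over A J P \<and> r \<notin> P"
  using exists_prime_avoid[OF assms] exists_min_prime[OF sr J] by blast

lemma rad_eq_inter_min: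
  assumes sr: "is_subring A" and J: "is_ideal A J"
  shows "radical A J = A \<inter> \<Inter>{P. minimal_prime_over A J P}"
proof
  show "radical A J \<subseteq> A \<inter> \<Inter>{P. minimal_prime_over A J P}"
    using prime_rad[OF sr] by (auto simp: radical_def minimal_prime_over_def)
  show "A \<inter> \<Inter>{P. minimal_prime_over A J P} \<subseteq> radical A J"
    using exists_min_prime_avoid[OF sr J] by blast
qed


lemma mc_pow: "mult_closed_nonzero A S \<Longrightarrow> s \<in> S \<Longrightarrow> s ^ n \<in> S"
  by (induction n) (auto simp: mult_closed_nonzero_def)

lemma mc_sub: "mult_closed_nonzero A S \<Longrightarrow> s \<in> S \<Longrightarrow> s \<in> A \<and> s \<noteq> 0"
  by (auto simp: mult_closed_nonzero_def)

lemma loc_contains: assumes "mult_closed_nonzero A S" "a \<in> A" shows "a \<in> localization A S"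
proof -
  have "1 \<in> S" using assms by (simp add: mult_closed_nonzero_def)
  moreover have "a = a / 1" by simp
  ultimately show ?thesis using assms(2) unfolding localization_def by blast
qed

lemma loc_mult: assumes sr: "is_subring A" and S: "mult_closed_nonzero A S"
  and x: "x \<in> localization A S" and y: "y \<in> localization A S"
  shows "x * y \<in> localization A S"
proof -
  obtain a s where as: "x = a / s" "a \<in> A" "s \<in> S" using x by (auto simp: localization_def)
  obtain b t where bt: "y = b / t" "b \<in> A" "t \<in> S" using y by (auto simp: localization_def)
  have "x * y = (a * b) / (s * t)" using as bt by simp
  moreover have "a * b \<in> A" using as bt sr_mult[OF sr] by blast
  moreover have "s * t \<in> S" using as bt S by (simp add: mult_closed_nonzero_def)
  ultimately show ?thesis unfolding localization_def by blast
qed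

lemma loc_elt: assumes S: "mult_closed_nonzero A S" and x: "x \<in> localization A S"
  shows "\<exists>s\<in>S. s \<in> elt_colon A x"
proof -
  obtain a s where as: "x = a / s" "a \<in> A" "s \<in> S" using x by (auto simp: localization_def)
  then have "s \<in> A" "s \<noteq> 0" using mc_sub[OF S] by auto
  then have "s * x = a" using as by simp
  then show ?thesis using as \<open>s \<in> A\<close> by (auto simp: elt_colon_def)
qed

lemma in_rad: "r \<in> A \<Longrightarrow> r ^ n \<in> I \<Longrightarrow> r \<in> radical A I"
  by (auto simp: radical_def)

lemma in_princ: "c \<in> A \<Longrightarrow> y = a * c \<Longrightarrow> y \<in> principal_ideal A a"
  by (auto simp: principal_ideal_def)

lemma part1a:
  assumes sr: "is_subring A" and ff: "is_fraction_field_of A"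
    and C1: "\<forall>x. x \<notin> A \<longrightarrow> (\<exists>a\<in>A. radical A (elt_colon A x) = radical A (principal_ideal A a))"
    and B: "is_sublocalization A B"
  shows "is_localization A B"
proof -
  obtain F where F: "\<forall>C\<in>F. is_localization A C" "B = \<Inter>F"
    using B by (auto simp: is_sublocalization_def)
  have AB: "A \<subseteq> B"
  proof
    fix a assume "a \<in> A"
    show "a \<in> B" unfolding F(2)
    proof
      fix C assume "C \<in> F"
      then obtain T where "mult_closed_nonzero A T" "C = localization A T"
        using F(1) by (auto simp: is_localization_def)
      then show "a \<in> C" using loc_contains \<open>a \<in> A\<close> by blast
    qed
  qed
  have mB: "x * y \<in> B" if "x \<in> B" "y \<in> B" for x y
    unfolding F(2)
  proof
    fix C assume "C \<in> F"
    then obtain T where "mult_closed_nonzero A T" "C = localization A T"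
      using F(1) by (auto simp: is_localization_def)
    then show "x * y \<in> C" using loc_mult[OF sr] that \<open>C \<in> F\<close> F(2) by blast
  qed
  define S where "S = {s \<in> A. s \<noteq> 0 \<and> 1 / s \<in> B}"
  have mcS: "mult_closed_nonzero A S" unfolding mult_closed_nonzero_def
  proof (intro conjI ballI)
    show "S \<subseteq> A - {0}" by (auto simp: S_def)
    show "1 \<in> S" using sr_1[OF sr] AB by (auto simp: S_def)
  next
    fix s t assume "s \<in> S" "t \<in> S"
    then have st: "s \<in> A" "t \<in> A" "s \<noteq> 0" "t \<noteq> 0" "1 / s \<in> B" "1 / t \<in> B" by (auto simp: S_def)
    have "(1 / s) * (1 / t) \<in> B" using mB st(5,6) by blast
    then have "1 / (s * t) \<in> B" by simp
    moreover have "s * t \<in> A" using sr_mult[OF sr st(1,2)] .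
    moreover have "s * t \<noteq> 0" using st(3,4) by simp
    ultimately show "s * t \<in> S" by (simp add: S_def)
  qed
  have "B = localization A S"
  proof
    show "localization A S \<subseteq> B"
    proof
      fix z assume "z \<in> localization A S"
      then obtain a s where as: "z = a / s" "a \<in> A" "s \<in> S" by (auto simp: localization_def)
      then have "a \<in> B" "1 / s \<in> B" using AB by (auto simp: S_def)
      then have "a * (1 / s) \<in> B" using mB by blast
      moreover have "z = a * (1 / s)" using as by simp
      ultimately show "z \<in> B" by simp
    qed
  next
    show "B \<subseteq> localization A S"
    proof
      fix x assume xB: "x \<in> B"
      show "x \<in> localization A S"
      proof (cases "x \<in> A")
        case True then show ?thesis using loc_contains[OF mcS] by blast
      next
        case False
        then obtain a where a: "a \<in> A" "radical A (elt_colon A x) = radical A (principal_ideal A a)"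
          using C1 by blast
        obtain p q where pq: "p \<in> A" "q \<in> A" "q \<noteq> 0" "x = p / q"
          using ff unfolding is_fraction_field_of_def by blast
        have "q \<in> elt_colon A x" using pq by (auto simp: elt_colon_def)
        then have "q \<in> radical A (elt_colon A x)" using in_rad[of q A 1] pq by simp
        then have "q \<in> radical A (principal_ideal A a)" using a by simp
        then obtain n c where "q ^ n = a * c" by (auto simp: radical_def principal_ideal_def)
        then have a0: "a \<noteq> 0" using pq(3) by auto
        have ainvB: "1 / a \<in> B" unfolding F(2)
        proof
          fix C assume "C \<in> F"
          then obtain T where T: "mult_closed_nonzero A T" "C = localization A T"
            using F(1) by (auto simp: is_localization_def)
          have "x \<in> C" using xB \<open>C \<in> F\<close> F(2) by blast
          then obtain t where t: "t \<in> T" "t \<in> elt_colon A x" using loc_elt T by blast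
          then have "t \<in> radical A (principal_ideal A a)" using a in_rad[of t A 1] by (auto simp: elt_colon_def)
          then obtain m c' where m: "t ^ m = a * c'" "c' \<in> A" by (auto simp: radical_def principal_ideal_def)
          have tm: "t ^ m \<in> T" using mc_pow[OF T(1) t(1)] .
          then have "t ^ m \<noteq> 0" using mc_sub[OF T(1)] by blast
          note tm = tm this
          have "1 / a = c' / t ^ m" using m tm a0 by (auto simp: field_simps)
          then show "1 / a \<in> C" using T(2) tm m(2) unfolding localization_def by blast
        qed
        have aS: "a \<in> S" using a a0 ainvB by (simp add: S_def)
        have "a \<in> radical A (principal_ideal A a)" using in_rad[of a A 1] in_princ[of 1 A a a] a sr_1[OF sr] by simp
        then have "a \<in> radical A (elt_colon A x)" using a by simp
        then obtain k where k: "a ^ k * x \<in> A" by (auto simp: radical_def elt_colon_def)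
        have "a ^ k \<in> S" "a ^ k \<noteq> 0" using mc_pow[OF mcS aS] a0 by auto
        moreover have "x = (a ^ k * x) / a ^ k" using \<open>a ^ k \<noteq> 0\<close> by simp
        ultimately show ?thesis using k unfolding localization_def by blast
      qed
    qed
  qed
  then show ?thesis using mcS by (auto simp: is_localization_def)
qed

lemma part1b:
  assumes sr: "is_subring A" and ff: "is_fraction_field_of A"
    and L: "\<forall>B. is_sublocalization A B \<longrightarrow> is_localization A B"
    and x: "x \<notin> A"
  shows "\<exists>a\<in>A. radical A (elt_colon A x) = radical A (principal_ideal A a)"
proof -
  define I where "I = elt_colon A x"
  define pw where "pw s = {s ^ n | n. True}" for s :: 'a
  have mcpw: "mult_closed_nonzero A (pw s)" if "s \<in> A" "s \<noteq> 0" for s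
    unfolding mult_closed_nonzero_def
  proof (intro conjI ballI)
    show "pw s \<subseteq> A - {0}" using that sr_pow[OF sr] by (auto simp: pw_def)
    show "1 \<in> pw s" unfolding pw_def by (rule CollectI, rule exI[of _ 0]) simp
  next
    fix u v assume "u \<in> pw s" "v \<in> pw s"
    then obtain n m where "u = s ^ n" "v = s ^ m" by (auto simp: pw_def)
    then have "u * v = s ^ (n + m)" by (simp add: power_add)
    then show "u * v \<in> pw s" by (auto simp: pw_def)
  qed
  define F where "F = {localization A (pw s) | s. s \<in> I \<and> s \<noteq> 0}"
  have "is_sublocalization A (\<Inter>F)" unfolding is_sublocalization_def
  proof (intro exI conjI)
    show "\<forall>C\<in>F. is_localization A C"
      using mcpw by (auto simp: F_def I_def elt_colon_def is_localization_def)
  qed simp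
  then obtain T where T: "mult_closed_nonzero A T" "\<Inter>F = localization A T"
    using L by (auto simp: is_localization_def)
  have "x \<in> \<Inter>F"
  proof
    fix C assume "C \<in> F"
    then obtain s where s: "C = localization A (pw s)" "s \<in> I" "s \<noteq> 0" by (auto simp: F_def)
    have "s \<in> pw s" unfolding pw_def by (rule CollectI, rule exI[of _ 1]) simp
    moreover have "x = (s * x) / s" using s by simp
    moreover have "s * x \<in> A" using s by (auto simp: I_def elt_colon_def)
    ultimately show "x \<in> C" using s unfolding localization_def by blast
  qed
  then obtain t where t: "t \<in> T" "t \<in> I" using loc_elt[OF T(1), of x] T(2) unfolding I_def by blast
  have tA: "t \<in> A" "t \<noteq> 0" using mc_sub[OF T(1) t(1)] by auto
  have "1 / t \<in> localization A T" using t sr_1[OF sr] unfolding localization_def by blast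
  then have tinv: "1 / t \<in> \<Inter>F" using T(2) by simp
  have Irad: "s \<in> radical A (principal_ideal A t)" if "s \<in> I" for s
  proof (cases "s = 0")
    case True
    then show ?thesis using in_rad[of 0 A 1] in_princ[of 0 A 0 t] sr_0[OF sr] by simp
  next
    case False
    have "s \<in> A" using that by (auto simp: I_def elt_colon_def)
    have "localization A (pw s) \<in> F" using that False by (auto simp: F_def)
    then have "1 / t \<in> localization A (pw s)" using tinv by blast
    then obtain c u where cu: "1 / t = c / u" "c \<in> A" "u \<in> pw s" by (auto simp: localization_def)
    then obtain n where n: "u = s ^ n" by (auto simp: pw_def)
    have "u \<noteq> 0" using n False by simp
    then have "s ^ n = t * c" using cu n tA by (auto simp: field_simps)
    then show ?thesis using in_rad[of s A n] in_princ[OF cu(2)] \<open>s \<in> A\<close> by simp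
  qed
  have "radical A I = radical A (principal_ideal A t)"
  proof
    show "radical A I \<subseteq> radical A (principal_ideal A t)"
    proof
      fix r assume "r \<in> radical A I"
      then obtain n where "r \<in> A" "r ^ n \<in> I" by (auto simp: radical_def)
      then obtain m where "(r ^ n) ^ m \<in> principal_ideal A t" using Irad by (auto simp: radical_def)
      then have "r ^ (n * m) \<in> principal_ideal A t" by (simp add: power_mult)
      then show "r \<in> radical A (principal_ideal A t)" using \<open>r \<in> A\<close> by (auto simp: radical_def)
    qed
  next
    show "radical A (principal_ideal A t) \<subseteq> radical A I"
    proof
      fix r assume "r \<in> radical A (principal_ideal A t)"
      then obtain n c where "r \<in> A" "r ^ n = t * c" "c \<in> A" by (auto simp: radical_def principal_ideal_def)
      moreover have "c * t \<in> I" using ideal_mult[OF elt_colon_ideal[OF sr] \<open>c \<in> A\<close>] t(2) by (simp add: I_def)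
      ultimately show "r \<in> radical A I" unfolding radical_def by (metis (mono_tags, lifting) mem_Collect_eq mult.commute)
    qed
  qed
  then show ?thesis using tA by (auto simp: I_def)
qed


lemma colon_eq:
  assumes sr: "is_subring A" and a: "a \<in> A" "a \<noteq> 0" and b: "b \<in> A"
  shows "ideal_colon A (principal_ideal A a) b = elt_colon A (b / a)"
proof
  show "ideal_colon A (principal_ideal A a) b \<subseteq> elt_colon A (b / a)"
  proof
    fix r assume "r \<in> ideal_colon A (principal_ideal A a) b"
    then have "r \<in> A" "r * b \<in> principal_ideal A a" by (simp_all add: ideal_colon_def)
    then obtain c where "r \<in> A" "r * b = a * c" "c \<in> A" unfolding principal_ideal_def by blast
    then have "r * (b / a) = (a * c) / a" by (metis times_divide_eq_right)
    then have "r * (b / a) = c" using a(2) by simp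
    then show "r \<in> elt_colon A (b / a)" using \<open>r \<in> A\<close> \<open>c \<in> A\<close> by (simp add: elt_colon_def)
  qed
  show "elt_colon A (b / a) \<subseteq> ideal_colon A (principal_ideal A a) b"
  proof
    fix r assume "r \<in> elt_colon A (b / a)"
    then have "r \<in> A" "r * (b / a) \<in> A" by (auto simp: elt_colon_def)
    moreover have "r * b = a * (r * (b / a))" using a(2) by simp
    ultimately have "r * b \<in> principal_ideal A a" using in_princ by blast
    then show "r \<in> ideal_colon A (principal_ideal A a) b"
      using \<open>r \<in> A\<close> by (simp add: ideal_colon_def)
  qed
qed

lemma assoc_min:
  assumes sr: "is_subring A" and a: "a \<in> A" "a \<noteq> 0" and b: "b \<in> A"
    and P: "minimal_prime_over A (elt_colon A (b / a)) P"
  shows "associated_prime A (principal_ideal A a) P"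
  unfolding associated_prime_def using P b colon_eq[OF sr a b] by (intro bexI[of _ b]) simp_all

lemma prod_div:
  assumes sr: "is_subring A" and M: "finite M" and u: "\<And>P. P \<in> M \<Longrightarrow> u P \<in> A"
    and h: "\<And>P. P \<in> M \<Longrightarrow> \<exists>n. \<exists>c\<in>A. r ^ n = u P * c"
  shows "\<exists>n. \<exists>c\<in>A. r ^ n = prod u M * c"
  using M u h
proof (induction M rule: finite_induct)
  case empty
  have "r ^ 0 = prod u {} * 1" by simp
  then show ?case using sr_1[OF sr] by blast
next
  case (insert P F)
  obtain n1 c1 where 1: "r ^ n1 = u P * c1" "c1 \<in> A" using insert.prems(2) by blast
  obtain n2 c2 where 2: "r ^ n2 = prod u F * c2" "c2 \<in> A" using insert.IH insert.prems by blast
  have "r ^ (n1 + n2) = prod u (insert P F) * (c1 * c2)"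
    using 1 2 insert.hyps by (simp add: power_add algebra_simps)
  moreover have "c1 * c2 \<in> A" using 1 2 sr_mult[OF sr] by blast
  ultimately show ?case by blast
qed

lemma part2a:
  assumes sr: "is_subring A" and ff: "is_fraction_field_of A"
    and FA: "\<forall>a\<in>A. finite {P. associated_prime A (principal_ideal A a) P}"
    and C2: "\<forall>a\<in>A. \<forall>P. associated_prime A (principal_ideal A a) P \<longrightarrow>
               (\<exists>b\<in>A. P = radical A (principal_ideal A b))"
    and x: "x \<notin> A"
  shows "\<exists>a\<in>A. radical A (elt_colon A x) = radical A (principal_ideal A a)"
proof -
  obtain p q where pq: "p \<in> A" "q \<in> A" "q \<noteq> 0" "x = p / q"
    using ff unfolding is_fraction_field_of_def by blast
  define I where "I = elt_colon A x"
  have Iid: "is_ideal A I" using elt_colon_ideal[OF sr] by (simp add: I_def)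
  define M where "M = {P. minimal_prime_over A I P}"
  have MAss: "M \<subseteq> {P. associated_prime A (principal_ideal A q) P}"
    using assoc_min[OF sr pq(2,3) pq(1)] pq(4) by (auto simp: M_def I_def)
  have finM: "finite M" using finite_subset[OF MAss] FA pq(2) by blast
  have "\<forall>P\<in>M. \<exists>v. v \<in> A \<and> P = radical A (principal_ideal A v)"
    using MAss C2 pq(2) by blast
  then have "\<exists>u. \<forall>P\<in>M. u P \<in> A \<and> P = radical A (principal_ideal A (u P))" by (rule bchoice)
  then obtain u where u0: "\<forall>P\<in>M. u P \<in> A \<and> P = radical A (principal_ideal A (u P))" by blast
  have u: "u P \<in> A \<and> P = radical A (principal_ideal A (u P))" if "P \<in> M" for P using u0 that by blast
  define U where "U = prod u M"
  have UA: "U \<in> A" unfolding U_def using u by (intro sr_prod[OF sr]) auto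
  have Mprime: "is_prime_ideal A P" if "P \<in> M" for P using that by (simp add: M_def minimal_prime_over_def)
  have radI: "radical A I = A \<inter> \<Inter>M" using rad_eq_inter_min[OF sr Iid] by (simp add: M_def)
  have "radical A I = radical A (principal_ideal A U)"
  proof
    show "radical A I \<subseteq> radical A (principal_ideal A U)"
    proof
      fix r assume "r \<in> radical A I"
      then have r: "r \<in> A" "\<And>P. P \<in> M \<Longrightarrow> r \<in> P" using radI by auto
      have "\<exists>n. \<exists>c\<in>A. r ^ n = u P * c" if "P \<in> M" for P
      proof -
        have "r \<in> radical A (principal_ideal A (u P))" using r(2)[OF that] u[OF that] by simp
        then show ?thesis unfolding radical_def principal_ideal_def by blast
      qed
      then obtain n c where "c \<in> A" "r ^ n = U * c" using prod_div[OF sr finM, of u r] u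
        unfolding U_def by blast
      then show "r \<in> radical A (principal_ideal A U)" using r(1)
        by (auto simp: radical_def principal_ideal_def)
    qed
  next
    show "radical A (principal_ideal A U) \<subseteq> radical A I"
    proof
      fix r assume "r \<in> radical A (principal_ideal A U)"
      then obtain n c where r: "r \<in> A" "r ^ n = U * c" "c \<in> A"
        by (auto simp: radical_def principal_ideal_def)
      have "r \<in> P" if P: "P \<in> M" for P
      proof -
        have "u P \<in> principal_ideal A (u P)" using in_princ[of 1 A "u P" "u P"] sr_1[OF sr] by simp
        then have "u P \<in> radical A (principal_ideal A (u P))" using in_rad[of "u P" A 1 "principal_ideal A (u P)"] u[OF P] by simp
        then have uP: "u P \<in> P" using u[OF P] by blast
        have "U = u P * prod u (M - {P})" unfolding U_def using finM P by (simp add: prod.remove)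
        moreover have "prod u (M - {P}) \<in> A" using u by (intro sr_prod[OF sr]) auto
        ultimately have "U \<in> P" using ideal_mult2[OF prime_ideal[OF Mprime[OF P]] _ uP] by simp
        then have "r ^ n \<in> P" using r ideal_mult2[OF prime_ideal[OF Mprime[OF P]] r(3)] by simp
        then show "r \<in> P" using prime_pow[OF sr Mprime[OF P] r(1)] by blast
      qed
      then show "r \<in> radical A I" using radI r(1) by blast
    qed
  qed
  then show ?thesis using UA by (auto simp: I_def)
qed


lemma part2b:
  assumes sr: "is_subring A" and ff: "is_fraction_field_of A"
    and FA: "\<forall>a\<in>A. finite {P. associated_prime A (principal_ideal A a) P}"
    and C1: "\<forall>x. x \<notin> A \<longrightarrow> (\<exists>a\<in>A. radical A (elt_colon A x) = radical A (principal_ideal A a))"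
    and a: "a \<in> A" and P: "associated_prime A (principal_ideal A a) P"
  shows "\<exists>b\<in>A. P = radical A (principal_ideal A b)"
proof -
  obtain b where b: "b \<in> A" "minimal_prime_over A (ideal_colon A (principal_ideal A a) b) P"
    using P unfolding associated_prime_def by blast
  have Pp: "is_prime_ideal A P" and PA: "P \<subseteq> A" and P1: "1 \<notin> P"
    using b(2) prime_one[OF sr] ideal_sub[OF prime_ideal] by (auto simp: minimal_prime_over_def)
  show ?thesis
  proof (cases "a = 0")
    case True
    have pz: "principal_ideal A 0 = {0}" using sr_0[OF sr] by (auto simp: principal_ideal_def)
    have rz: "radical A {0} = {0}" using sr_0[OF sr] by (auto simp: radical_def)
    show ?thesis
    proof (cases "b = 0")
      case True
      have "ideal_colon A (principal_ideal A a) b = A" using \<open>a = 0\<close> True pz by (auto simp: ideal_colon_def)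
      then have "A \<subseteq> P" using b(2) by (simp add: minimal_prime_over_def)
      then show ?thesis using P1 sr_1[OF sr] by blast
    next
      case False
      have col: "ideal_colon A (principal_ideal A a) b = {0}" using \<open>a = 0\<close> False pz sr_0[OF sr]
        by (auto simp: ideal_colon_def)
      have zp: "is_prime_ideal A {0}" unfolding is_prime_ideal_def is_ideal_def
        using sr_0[OF sr] sr_1[OF sr] by auto
      have "{0} = P" using b(2) zp col unfolding minimal_prime_over_def by blast
      then show ?thesis using pz rz sr_0[OF sr] by metis
    qed
  next
    case False
    define x where "x = b / a"
    define Id where "Id d = elt_colon A (d * x)" for d
    have Idid: "is_ideal A (Id d)" for d using elt_colon_ideal[OF sr] by (simp add: Id_def)
    have Id1: "Id 1 = ideal_colon A (principal_ideal A a) b"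
      using colon_eq[OF sr a False b(1)] by (simp add: Id_def x_def)
    have IdP: "Id 1 \<subseteq> P" using b(2) Id1 by (simp add: minimal_prime_over_def)
    define Ass where "Ass = {P. associated_prime A (principal_ideal A a) P}"
    have finAss: "finite Ass" using FA a by (simp add: Ass_def)
    have minAss: "{Q. minimal_prime_over A (Id d) Q} \<subseteq> Ass" if "d \<in> A" for d
    proof -
      have "Id d = elt_colon A ((d * b) / a)" by (simp add: Id_def x_def)
      then show ?thesis using assoc_min[OF sr a False sr_mult[OF sr that b(1)]] by (auto simp: Ass_def)
    qed
    have radId: "radical A (Id d) = A \<inter> \<Inter>{Q. minimal_prime_over A (Id d) Q}" for d
      using rad_eq_inter_min[OF sr Idid] .
    define Sig where "Sig = {radical A (Id d) | d. d \<in> A \<and> Id d \<subseteq> P}"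
    have "Sig \<subseteq> (\<lambda>N. A \<inter> \<Inter>N) ` Pow Ass"
    proof
      fix K assume "K \<in> Sig"
      then obtain d where "d \<in> A" "K = radical A (Id d)" by (auto simp: Sig_def)
      then show "K \<in> (\<lambda>N. A \<inter> \<Inter>N) ` Pow Ass" using radId[of d] minAss[of d] by blast
    qed
    then have finSig: "finite Sig" using finAss finite_subset by blast
    have "radical A (Id 1) \<in> Sig" using IdP sr_1[OF sr] by (auto simp: Sig_def)
    then have "Sig \<noteq> {}" by blast
    then obtain K0 where K0: "K0 \<in> Sig" "\<forall>K\<in>Sig. K0 \<subseteq> K \<longrightarrow> K0 = K"
      using finite_has_maximal[OF finSig] by blast
    then obtain d0 where d0: "d0 \<in> A" "Id d0 \<subseteq> P" "K0 = radical A (Id d0)" by (auto simp: Sig_def)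
    have I1d: "Id 1 \<subseteq> Id e" if "e \<in> A" for e
    proof
      fix r assume "r \<in> Id 1"
      then have "r \<in> A" "r * x \<in> A" by (auto simp: Id_def elt_colon_def)
      then have "e * (r * x) \<in> A" using sr_mult[OF sr that] by blast
      then show "r \<in> Id e" using \<open>r \<in> A\<close> by (simp add: Id_def elt_colon_def algebra_simps)
    qed
    have Pmin0: "minimal_prime_over A (Id d0) P" unfolding minimal_prime_over_def
    proof (intro conjI allI impI)
      show "is_prime_ideal A P" "Id d0 \<subseteq> P" using Pp d0 by auto
    next
      fix Q assume Q: "is_prime_ideal A Q \<and> Id d0 \<subseteq> Q \<and> Q \<subseteq> P"
      then have "ideal_colon A (principal_ideal A a) b \<subseteq> Q" using I1d[OF d0(1)] Id1 by blast
      then show "Q = P" using Q b(2) unfolding minimal_prime_over_def by blast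
    qed
    have "P = radical A (Id d0)"
    proof
      show "radical A (Id d0) \<subseteq> P" using prime_rad[OF sr Pp d0(2)] .
    next
      show "P \<subseteq> radical A (Id d0)"
      proof (rule ccontr)
        assume "\<not> P \<subseteq> radical A (Id d0)"
        then obtain r where r: "r \<in> P" "r \<notin> radical A (Id d0)" by blast
        have rA: "r \<in> A" using r PA by blast
        define MM where "MM = {Q. minimal_prime_over A (Id d0) Q}"
        have finMM: "finite MM" using minAss[OF d0(1)] finAss finite_subset unfolding MM_def by blast
        have "\<exists>c. c \<in> Q \<and> c \<notin> P" if "Q \<in> MM - {P}" for Q
        proof (rule ccontr)
          assume "\<not> ?thesis"
          then have "Q \<subseteq> P" by blast
          then have "Q = P" using that Pmin0 unfolding MM_def minimal_prime_over_def by blast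
          then show False using that by blast
        qed
        then have "\<forall>Q\<in>MM - {P}. \<exists>c. c \<in> Q \<and> c \<notin> P" by blast
        then have "\<exists>cf. \<forall>Q\<in>MM - {P}. cf Q \<in> Q \<and> cf Q \<notin> P" by (rule bchoice)
        then obtain cf where cf: "\<And>Q. Q \<in> MM - {P} \<Longrightarrow> cf Q \<in> Q \<and> cf Q \<notin> P" by blast
        have QA: "Q \<subseteq> A" if "Q \<in> MM" for Q
          using that ideal_sub[OF prime_ideal] unfolding MM_def minimal_prime_over_def by blast
        define c where "c = prod cf (MM - {P})"
        have cA: "c \<in> A" unfolding c_def using cf QA by (intro sr_prod[OF sr]) blast
        have cP: "c \<notin> P" unfolding c_def using cf QA finMM by (intro prime_prod[OF sr Pp]) auto
        have rcQ: "r * c \<in> Q" if "Q \<in> MM" for Q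
        proof (cases "Q = P")
          case True
          then show ?thesis using ideal_mult2[OF prime_ideal[OF Pp] cA r(1)] by simp
        next
          case False
          then have QM: "Q \<in> MM - {P}" using that by blast
          have Qid: "is_ideal A Q" using that prime_ideal unfolding MM_def minimal_prime_over_def by blast
          have "c = cf Q * prod cf (MM - {P} - {Q})" unfolding c_def
            using finMM QM by (simp add: prod.remove)
          moreover have "prod cf (MM - {P} - {Q}) \<in> A" using cf QA by (intro sr_prod[OF sr]) blast
          ultimately have "c \<in> Q" using ideal_mult2[OF Qid _ conjunct1[OF cf[OF QM]]] by simp
          then show ?thesis using ideal_mult[OF Qid rA] by blast
        qed
        have rcA: "r * c \<in> A" using sr_mult[OF sr rA cA] .
        then have "r * c \<in> radical A (Id d0)" using radId[of d0] rcQ unfolding MM_def by blast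
        then obtain m where m: "(r * c) ^ m * (d0 * x) \<in> A" by (auto simp: radical_def Id_def elt_colon_def)
        define d1 where "d1 = d0 * c ^ m"
        have d1A: "d1 \<in> A" unfolding d1_def using sr_mult[OF sr d0(1) sr_pow[OF sr cA]] .
        have "r ^ m * (d1 * x) = (r * c) ^ m * (d0 * x)" unfolding d1_def by (simp add: power_mult_distrib algebra_simps)
        then have "r ^ m * (d1 * x) \<in> A" using m by metis
        then have rm: "r ^ m \<in> Id d1" using sr_pow[OF sr rA] by (simp add: Id_def elt_colon_def)
        have Id1P: "Id d1 \<subseteq> P"
        proof
          fix s assume "s \<in> Id d1"
          then have s: "s \<in> A" "s * (d1 * x) \<in> A" by (auto simp: Id_def elt_colon_def)
          have scA: "s * c ^ m \<in> A" using sr_mult[OF sr s(1) sr_pow[OF sr cA]] .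
          have "(s * c ^ m) * (d0 * x) = s * (d1 * x)" unfolding d1_def by (simp add: algebra_simps)
          then have "(s * c ^ m) * (d0 * x) \<in> A" using s by metis
          then have "s * c ^ m \<in> Id d0" using scA by (simp add: Id_def elt_colon_def)
          then have "s * c ^ m \<in> P" using d0(2) by blast
          then have "s \<in> P \<or> c ^ m \<in> P" using prime_mult[OF Pp s(1) sr_pow[OF sr cA]] by blast
          then show "s \<in> P" using prime_pow[OF sr Pp cA] cP by blast
        qed
        have "radical A (Id d1) \<in> Sig" using d1A Id1P by (auto simp: Sig_def)
        moreover have "K0 \<subseteq> radical A (Id d1)"
        proof
          fix z assume "z \<in> K0"
          then obtain k where z: "z \<in> A" "z ^ k * (d0 * x) \<in> A" by (auto simp: d0(3) radical_def Id_def elt_colon_def)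
          have "z ^ k * (d1 * x) = c ^ m * (z ^ k * (d0 * x))" unfolding d1_def by (simp add: algebra_simps)
          moreover have "c ^ m * (z ^ k * (d0 * x)) \<in> A" using z(2) sr_mult[OF sr sr_pow[OF sr cA]] by blast
          ultimately have "z ^ k * (d1 * x) \<in> A" by metis
          then show "z \<in> radical A (Id d1)" using z(1) sr_pow[OF sr z(1)]
            by (auto simp: radical_def Id_def elt_colon_def)
        qed
        ultimately have "K0 = radical A (Id d1)" using K0(2) by blast
        moreover have "r \<in> radical A (Id d1)" using in_rad[OF rA rm] .
        ultimately show False using r(2) d0(3) by simp
      qed
    qed
    moreover have "d0 * x \<notin> A"
    proof
      assume "d0 * x \<in> A"
      then have "1 \<in> Id d0" using sr_1[OF sr] by (simp add: Id_def elt_colon_def)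
      then show False using d0(2) P1 by blast
    qed
    ultimately show ?thesis using C1 by (simp add: Id_def)
  qed
qed


theorem theorem2p5:
  fixes A :: "'k::field set"
  assumes "is_subring A" and "is_fraction_field_of A"
  shows "((\<forall>B. is_sublocalization A B \<longrightarrow> is_localization A B) \<longleftrightarrow>
           (\<forall>x. x \<notin> A \<longrightarrow>
              (\<exists>a\<in>A. radical A (elt_colon A x) = radical A (principal_ideal A a))))
       \<and> ((\<forall>a\<in>A. finite {P. associated_prime A (principal_ideal A a) P}) \<longrightarrow>
           ((\<forall>B. is_sublocalization A B \<longrightarrow> is_localization A B) \<longleftrightarrow>
            (\<forall>a\<in>A. \<forall>P. associated_prime A (principal_ideal A a) P \<longrightarrow>
               (\<exists>b\<in>A. P = radical A (principal_ideal A b)))))"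
proof -
  have eq1: "(\<forall>B. is_sublocalization A B \<longrightarrow> is_localization A B) \<longleftrightarrow>
           (\<forall>x. x \<notin> A \<longrightarrow>
              (\<exists>a\<in>A. radical A (elt_colon A x) = radical A (principal_ideal A a)))"
    using part1a[OF assms] part1b[OF assms] by blast
  moreover have "(\<forall>x. x \<notin> A \<longrightarrow>
              (\<exists>a\<in>A. radical A (elt_colon A x) = radical A (principal_ideal A a))) \<longleftrightarrow>
            (\<forall>a\<in>A. \<forall>P. associated_prime A (principal_ideal A a) P \<longrightarrow>
               (\<exists>b\<in>A. P = radical A (principal_ideal A b)))"
    if FA: "\<forall>a\<in>A. finite {P. associated_prime A (principal_ideal A a) P}"
    using part2a[OF assms FA] part2b[OF assms FA] by blast
  ultimately show ?thesis by blast
qed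

end
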